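(* Let $\mathcal M=(R,D,C)$ be a $\lambda\mu$-model in the category of $\omega$-algebraic lattices. If $\Gamma\vdash T:\sigma\mid\Delta$ is derivable in the intersection type assignment system, then $\models_{\mathcal M}\Gamma\vdash T:\sigma\mid\Delta$, for any term or command $T$.
   Context: $\lambda\mu$ terms and commands: $M::=x\mid\lambda x.M\mid MN\mid\mu\alpha.\mathsf C$ and $\mathsf C::=[\alpha]M$. $\lambda\mu$-model. In the category of $\omega$-algebraic lattices (Scott-continuous maps), $(R,D,C)$ is a $\lambda\mu$-model if $D=[C\to R]$ and $C=D\times C$ (up to isomorphism). Environments $e$ map term variables into $D$ and names into $C$. The interpretation is: - $[\![x]\!]e\,k=e(x)k$; - $[\![\lambda x.M]\!]e\langle d,k'\rangle=[\![M]\!](e[x\to d])k'$; - $[\![MN]\!]e\,k=[\![M]\!]e\langle[\![N]\!]e,k\rangle$; - $[\![\mu\alpha.\mathsf C]\!]e\,k=d\,k'$, where $\langle d,k'\rangle=[\![\mathsf C]\!](e[\alpha\to k])$; - $[\![[\alpha]M]\!]e=\langle[\![M]\!]e,e(\alpha)\rangle\in C$. Types. With $\mathcal K(R)$ the compact elements of $R$: - $\Lambda_R$: $\rho::=\psi_a\mid\omega\mid\rho\wedge\rho$ ($a\in\mathcal K(R)$). - $\Lambda_D$: $\delta::=\rho\mid\kappa\to\rho\mid\omega\mid\delta\wedge\delta$. - $\Lambda_C$: $\kappa::=\delta\times\kappa\mid\omega\mid\kappa\wedge\kappa$. The relations $\le_R,\le_D,\le_C$ are the least reflexive, transitive relations with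 $\sigma\wedge\tau\le\sigma,\tau$, $\sigma\le\omega$, $\rho\le\sigma,\tau\Rightarrow\rho\le\sigma\wedge\tau$, and additionally: - $\psi_\bot\sim\omega$ and $\psi_{a\sqcup b}\sim\psi_a\wedge\psi_b$; - if $\rho_1\le_R\rho_2$ then $\rho_1\le_D\rho_2$; - $\omega\le_D\omega\to\omega$; - $\psi_a\le_D\omega\to\psi_a\le_D\psi_a$; - $\omega\le_C\omega\times\omega$; - $(\kappa\to\rho_1)\wedge(\kappa\to\rho_2)\le_D\kappa\to(\rho_1\wedge\rho_2)$; - $(\delta_1\times\kappa_1)\wedge(\delta_2\times\kappa_2)\le_C(\delta_1\wedge\delta_2)\times(\kappa_1\wedge\kappa_2)$; - $\to$ is contravariant in $\Lambda_C$ and covariant in $\Lambda_R$; - $\times$ is covariant in both arguments. Type assignment. A basis $\Gamma$ is a finite map from variables to $\Lambda_D$, and a context $\Delta$ is a finite map from names to $\Lambda_C$. $\Gamma(x)$ and $\Delta(\alpha)$ are $\omega$ outside the domain. The rules are: - (Ax) $\Gamma,x{:}\delta\vdash x:\delta\mid\Delta$. - (Abs) From $\Gamma\vdash M:\kappa\to\rho\mid\Delta$, $\Gamma(x)=\delta$, infer $\Gamma\setminus x\vdash\lambda x.M:(\delta\times\kappa)\to\rho\mid\Delta$. - (App) From $\Gamma\vdash M:(\delta\times\kappa)\to\rho\mid\Delta$ and $\Gamma\vdash N:\delta\mid\Delta$, infer $\Gamma\vdash MN:\kappa\to\rho\mid\Delta$. - (Cmd) From $\Gamma\vdash M:\delta\mid\Delta$,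 $\Delta(\alpha)=\kappa$, infer $\Gamma\vdash[\alpha]M:\delta\times\kappa\mid\Delta$. - ($\mu$) From $\Gamma\vdash\mathsf C:(\kappa'\to\rho)\times\kappa'\mid\Delta$, $\Delta(\alpha)=\kappa$, infer $\Gamma\vdash\mu\alpha.\mathsf C:\kappa\to\rho\mid\Delta\setminus\alpha$. - ($\wedge$), ($\omega$) (every $T$ gets $\omega$), and ($\le$) (subsumption via $\le_D$ or $\le_C$). Type interpretation in $\mathcal M$: - $[\![\psi_a]\!]^R=\{r\in R\mid a\sqsubseteq r\}$; - $[\![\delta\times\kappa]\!]^C=[\![\delta]\!]^D\times[\![\kappa]\!]^C$; - $[\![\kappa\to\rho]\!]^D=\{d\in D\mid\forall k\in[\![\kappa]\!]^C:\ d\,k\in[\![\rho]\!]^R\}$; - $[\![\psi_a]\!]^D=\{d\in D\mid\forall k\in C:\ d\,k\in[\![\psi_a]\!]^R\}$; - $[\![\omega]\!]^A=A$ and $[\![\sigma\wedge\tau]\!]^A=[\![\sigma]\!]^A\cap[\![\tau]\!]^A$. Satisfiability: - $e\models\Gamma;\Delta$ iff $e(x)\in[\![\Gamma(x)]\!]^D$ for all $x$ and $e(\alpha)\in[\![\Delta(\alpha)]\!]^C$ for all $\alpha$; - $\models_{\mathcal M}\Gamma\vdash M:\delta\mid\Delta$ iff for all $e$ with $e\models\Gamma;\Delta$, $[\![M]\!]e\in[\![\delta]\!]^D$; - likewise for commands, with $[\![\mathsf C]\!]e\in[\![\kappa]\!]^C$. *)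

theory Defs
  imports Main "HOL-Library.Countable_Set" "HOL-Library.Product_Order"
begin

definition directed :: "'a::complete_lattice set \<Rightarrow> bool" where
  "directed S \<longleftrightarrow> S \<noteq> {} \<and> (\<forall>x\<in>S. \<forall>y\<in>S. \<exists>z\<in>S. x \<le> z \<and> y \<le> z)"

definition scott_cont :: "('a::complete_lattice \<Rightarrow> 'b::complete_lattice) \<Rightarrow> bool" where
  "scott_cont f \<longleftrightarrow> (\<forall>S. directed S \<longrightarrow> f (Sup S) = Sup (f ` S))"

text \<open>Scott continuity of a map defined on a sub-lattice closed under directed sups
  (used for the inverse of the isomorphism onto the function space [C -> R]).\<close>
definition scott_cont_on :: "'a::complete_lattice set \<Rightarrow> ('a \<Rightarrow> 'b::complete_lattice) \<Rightarrow> bool" where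
  "scott_cont_on A f \<longleftrightarrow> (\<forall>S. S \<subseteq> A \<longrightarrow> directed S \<longrightarrow> f (Sup S) = Sup (f ` S))"

definition compact_el :: "'a::complete_lattice \<Rightarrow> bool" where
  "compact_el a \<longleftrightarrow> (\<forall>S. directed S \<longrightarrow> a \<le> Sup S \<longrightarrow> (\<exists>s\<in>S. a \<le> s))"

definition omega_algebraic :: "'a::complete_lattice itself \<Rightarrow> bool" where
  "omega_algebraic _ \<longleftrightarrow>
     countable {a::'a. compact_el a} \<and> (\<forall>x::'a. x = Sup {a. compact_el a \<and> a \<le> x})"

typedef (overloaded) ('r::complete_lattice) kel = "{a::'r. compact_el a}"
  by (rule exI[of _ bot]) (auto simp: compact_el_def directed_def)

text \<open>A lambda-mu model (R,D,C): all three are omega-algebraic lattices,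
  app : D -> [C -> R] is an isomorphism (Scott continuous, with Scott continuous
  inverse lam) onto the lattice of Scott continuous functions C -> R (pointwise order),
  and pr : D x C -> C is an isomorphism with inverse unpr.\<close>
definition lm_model ::
  "('d::complete_lattice \<Rightarrow> 'c::complete_lattice \<Rightarrow> 'r::complete_lattice)
   \<Rightarrow> (('c \<Rightarrow> 'r) \<Rightarrow> 'd) \<Rightarrow> ('d \<times> 'c \<Rightarrow> 'c) \<Rightarrow> ('c \<Rightarrow> 'd \<times> 'c) \<Rightarrow> bool" where
  "lm_model app lam pr unpr \<longleftrightarrow>
     omega_algebraic TYPE('r) \<and> omega_algebraic TYPE('d) \<and> omega_algebraic TYPE('c) \<and>
     range app = {f. scott_cont f} \<and>
     (\<forall>d. lam (app d) = d) \<and> (\<forall>f. scott_cont f \<longrightarrow> app (lam f) = f) \<and>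
     scott_cont app \<and> scott_cont_on {f. scott_cont f} lam \<and>
     (\<forall>p. unpr (pr p) = p) \<and> (\<forall>c. pr (unpr c) = c) \<and>
     scott_cont pr \<and> scott_cont unpr"

type_synonym var = nat
type_synonym name = nat

datatype trm = Var var | Lam var trm | App trm trm | Mu name cmd
     and cmd = Cmd name trm

primrec semT :: "('d::complete_lattice \<Rightarrow> 'c::complete_lattice \<Rightarrow> 'r::complete_lattice)
   \<Rightarrow> (('c \<Rightarrow> 'r) \<Rightarrow> 'd) \<Rightarrow> ('d \<times> 'c \<Rightarrow> 'c) \<Rightarrow> ('c \<Rightarrow> 'd \<times> 'c)
   \<Rightarrow> (var \<Rightarrow> 'd) \<Rightarrow> (name \<Rightarrow> 'c) \<Rightarrow> trm \<Rightarrow> 'd"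
and semC :: "('d::complete_lattice \<Rightarrow> 'c::complete_lattice \<Rightarrow> 'r::complete_lattice)
   \<Rightarrow> (('c \<Rightarrow> 'r) \<Rightarrow> 'd) \<Rightarrow> ('d \<times> 'c \<Rightarrow> 'c) \<Rightarrow> ('c \<Rightarrow> 'd \<times> 'c)
   \<Rightarrow> (var \<Rightarrow> 'd) \<Rightarrow> (name \<Rightarrow> 'c) \<Rightarrow> cmd \<Rightarrow> 'c" where
  "semT app lam pr unpr ex ea (Var x) = ex x"
| "semT app lam pr unpr ex ea (Lam x M) =
     lam (\<lambda>k. app (semT app lam pr unpr (ex(x := fst (unpr k))) ea M) (snd (unpr k)))"
| "semT app lam pr unpr ex ea (App M N) =
     lam (\<lambda>k. app (semT app lam pr unpr ex ea M) (pr (semT app lam pr unpr ex ea N, k)))"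
| "semT app lam pr unpr ex ea (Mu \<alpha> c) =
     lam (\<lambda>k. app (fst (unpr (semC app lam pr unpr ex (ea(\<alpha> := k)) c)))
                   (snd (unpr (semC app lam pr unpr ex (ea(\<alpha> := k)) c))))"
| "semC app lam pr unpr ex ea (Cmd \<alpha> M) = pr (semT app lam pr unpr ex ea M, ea \<alpha>)"

text \<open>One syntax for all three sorts (so that Lambda_R is literally a subset of Lambda_D and
  omega / intersection are shared), with sort predicates carving out Lambda_R, Lambda_D, Lambda_C.\<close>
datatype 'k ty = Psi 'k | Om | And "'k ty" "'k ty" | Arr "'k ty" "'k ty" | Times "'k ty" "'k ty"

fun isR :: "'k ty \<Rightarrow> bool" where
  "isR (Psi a) = True"
| "isR Om = True"
| "isR (And s t) = (isR s \<and> isR t)"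
| "isR (Arr k r) = False"
| "isR (Times d k) = False"

fun isD :: "'k ty \<Rightarrow> bool" and isC :: "'k ty \<Rightarrow> bool" where
  "isD (Psi a) = True"
| "isD Om = True"
| "isD (And s t) = (isD s \<and> isD t)"
| "isD (Arr k r) = (isC k \<and> isR r)"
| "isD (Times d k) = False"
| "isC (Psi a) = False"
| "isC Om = True"
| "isC (And s t) = (isC s \<and> isC t)"
| "isC (Arr k r) = False"
| "isC (Times d k) = (isD d \<and> isC k)"

inductive leR :: "'r::complete_lattice kel ty \<Rightarrow> 'r kel ty \<Rightarrow> bool" where
  R_refl: "isR s \<Longrightarrow> leR s s"
| R_trans: "leR s t \<Longrightarrow> leR t u \<Longrightarrow> leR s u"
| R_and1: "isR s \<Longrightarrow> isR t \<Longrightarrow> leR (And s t) s"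
| R_and2: "isR s \<Longrightarrow> isR t \<Longrightarrow> leR (And s t) t"
| R_om: "isR s \<Longrightarrow> leR s Om"
| R_glb: "leR r s \<Longrightarrow> leR r t \<Longrightarrow> leR r (And s t)"
| R_bot1: "Rep_kel a = bot \<Longrightarrow> leR (Psi a) Om"
| R_bot2: "Rep_kel a = bot \<Longrightarrow> leR Om (Psi a)"
| R_sup1: "Rep_kel c = sup (Rep_kel a) (Rep_kel b) \<Longrightarrow> leR (Psi c) (And (Psi a) (Psi b))"
| R_sup2: "Rep_kel c = sup (Rep_kel a) (Rep_kel b) \<Longrightarrow> leR (And (Psi a) (Psi b)) (Psi c)"

inductive leD :: "'r::complete_lattice kel ty \<Rightarrow> 'r kel ty \<Rightarrow> bool"
      and leC :: "'r::complete_lattice kel ty \<Rightarrow> 'r kel ty \<Rightarrow> bool" where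
  D_refl: "isD s \<Longrightarrow> leD s s"
| D_trans: "leD s t \<Longrightarrow> leD t u \<Longrightarrow> leD s u"
| D_and1: "isD s \<Longrightarrow> isD t \<Longrightarrow> leD (And s t) s"
| D_and2: "isD s \<Longrightarrow> isD t \<Longrightarrow> leD (And s t) t"
| D_om: "isD s \<Longrightarrow> leD s Om"
| D_glb: "leD r s \<Longrightarrow> leD r t \<Longrightarrow> leD r (And s t)"
| D_R: "leR r1 r2 \<Longrightarrow> leD r1 r2"
| D_omarr: "leD Om (Arr Om Om)"
| D_psi1: "leD (Psi a) (Arr Om (Psi a))"
| D_psi2: "leD (Arr Om (Psi a)) (Psi a)"
| D_arrand: "isC k \<Longrightarrow> isR r1 \<Longrightarrow> isR r2 \<Longrightarrow>
     leD (And (Arr k r1) (Arr k r2)) (Arr k (And r1 r2))"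
| D_arr: "leC k2 k1 \<Longrightarrow> leR r1 r2 \<Longrightarrow> leD (Arr k1 r1) (Arr k2 r2)"
| C_refl: "isC s \<Longrightarrow> leC s s"
| C_trans: "leC s t \<Longrightarrow> leC t u \<Longrightarrow> leC s u"
| C_and1: "isC s \<Longrightarrow> isC t \<Longrightarrow> leC (And s t) s"
| C_and2: "isC s \<Longrightarrow> isC t \<Longrightarrow> leC (And s t) t"
| C_om: "isC s \<Longrightarrow> leC s Om"
| C_glb: "leC r s \<Longrightarrow> leC r t \<Longrightarrow> leC r (And s t)"
| C_omtimes: "leC Om (Times Om Om)"
| C_timesand: "isD d1 \<Longrightarrow> isD d2 \<Longrightarrow> isC k1 \<Longrightarrow> isC k2 \<Longrightarrow>
     leC (And (Times d1 k1) (Times d2 k2)) (Times (And d1 d2) (And k1 k2))"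
| C_times: "leD d1 d2 \<Longrightarrow> leC k1 k2 \<Longrightarrow> leC (Times d1 k1) (Times d2 k2)"

definition look :: "(nat \<rightharpoonup> 'k ty) \<Rightarrow> nat \<Rightarrow> 'k ty" where
  "look G x = (case G x of None \<Rightarrow> Om | Some t \<Rightarrow> t)"

definition basis :: "(var \<rightharpoonup> 'k ty) \<Rightarrow> bool" where
  "basis G \<longleftrightarrow> finite (dom G) \<and> (\<forall>x t. G x = Some t \<longrightarrow> isD t)"

definition name_context :: "(name \<rightharpoonup> 'k ty) \<Rightarrow> bool" where
  "name_context D \<longleftrightarrow> finite (dom D) \<and> (\<forall>a t. D a = Some t \<longrightarrow> isC t)"

inductive tyT :: "(var \<rightharpoonup> 'r::complete_lattice kel ty) \<Rightarrow> trm \<Rightarrow> 'r kel ty \<Rightarrow> (name \<rightharpoonup> 'r kel ty) \<Rightarrow> bool"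
      and tyC :: "(var \<rightharpoonup> 'r::complete_lattice kel ty) \<Rightarrow> cmd \<Rightarrow> 'r kel ty \<Rightarrow> (name \<rightharpoonup> 'r kel ty) \<Rightarrow> bool"
where
  T_ax: "basis G \<Longrightarrow> name_context Dl \<Longrightarrow> G x = Some d \<Longrightarrow> tyT G (Var x) d Dl"
| T_abs: "tyT G M (Arr k r) Dl \<Longrightarrow> look G x = d \<Longrightarrow>
     tyT (G(x := None)) (Lam x M) (Arr (Times d k) r) Dl"
| T_app: "tyT G M (Arr (Times d k) r) Dl \<Longrightarrow> tyT G N d Dl \<Longrightarrow> tyT G (App M N) (Arr k r) Dl"
| T_mu: "tyC G c (Times (Arr k' r) k') Dl \<Longrightarrow> look Dl \<alpha> = k \<Longrightarrow>
     tyT G (Mu \<alpha> c) (Arr k r) (Dl(\<alpha> := None))"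
| T_and: "tyT G M s Dl \<Longrightarrow> tyT G M t Dl \<Longrightarrow> tyT G M (And s t) Dl"
| T_om: "basis G \<Longrightarrow> name_context Dl \<Longrightarrow> tyT G M Om Dl"
| T_le: "tyT G M s Dl \<Longrightarrow> leD s t \<Longrightarrow> tyT G M t Dl"
| C_cmd: "tyT G M d Dl \<Longrightarrow> look Dl \<alpha> = k \<Longrightarrow> tyC G (Cmd \<alpha> M) (Times d k) Dl"
| C_and: "tyC G c s Dl \<Longrightarrow> tyC G c t Dl \<Longrightarrow> tyC G c (And s t) Dl"
| C_om: "basis G \<Longrightarrow> name_context Dl \<Longrightarrow> tyC G c Om Dl"
| C_le: "tyC G c s Dl \<Longrightarrow> leC s t \<Longrightarrow> tyC G c t Dl"

fun tR :: "'r::complete_lattice kel ty \<Rightarrow> 'r set" where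
  "tR (Psi a) = {r. Rep_kel a \<le> r}"
| "tR Om = UNIV"
| "tR (And s t) = tR s \<inter> tR t"
| "tR (Arr k r) = {}"
| "tR (Times d k) = {}"

fun tD :: "('d::complete_lattice \<Rightarrow> 'c::complete_lattice \<Rightarrow> 'r::complete_lattice)
      \<Rightarrow> ('c \<Rightarrow> 'd \<times> 'c) \<Rightarrow> 'r kel ty \<Rightarrow> 'd set"
and tC :: "('d::complete_lattice \<Rightarrow> 'c::complete_lattice \<Rightarrow> 'r::complete_lattice)
      \<Rightarrow> ('c \<Rightarrow> 'd \<times> 'c) \<Rightarrow> 'r kel ty \<Rightarrow> 'c set" where
  "tD app unpr (Psi a) = {d. \<forall>k. app d k \<in> tR (Psi a)}"
| "tD app unpr Om = UNIV"
| "tD app unpr (And s t) = tD app unpr s \<inter> tD app unpr t"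
| "tD app unpr (Arr k r) = {d. \<forall>c\<in>tC app unpr k. app d c \<in> tR r}"
| "tD app unpr (Times d k) = {}"
| "tC app unpr (Psi a) = {}"
| "tC app unpr Om = UNIV"
| "tC app unpr (And s t) = tC app unpr s \<inter> tC app unpr t"
| "tC app unpr (Arr k r) = {}"
| "tC app unpr (Times d k) =
     {c. fst (unpr c) \<in> tD app unpr d \<and> snd (unpr c) \<in> tC app unpr k}"

definition sat :: "('d::complete_lattice \<Rightarrow> 'c::complete_lattice \<Rightarrow> 'r::complete_lattice)
      \<Rightarrow> ('c \<Rightarrow> 'd \<times> 'c) \<Rightarrow> (var \<Rightarrow> 'd) \<Rightarrow> (name \<Rightarrow> 'c)
      \<Rightarrow> (var \<rightharpoonup> 'r kel ty) \<Rightarrow> (name \<rightharpoonup> 'r kel ty) \<Rightarrow> bool" where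
  "sat app unpr ex ea G Dl \<longleftrightarrow>
     (\<forall>x. ex x \<in> tD app unpr (look G x)) \<and> (\<forall>\<alpha>. ea \<alpha> \<in> tC app unpr (look Dl \<alpha>))"

definition validT where
  "validT app lam pr unpr G M s Dl \<longleftrightarrow>
     (\<forall>ex ea. sat app unpr ex ea G Dl \<longrightarrow> semT app lam pr unpr ex ea M \<in> tD app unpr s)"

definition validC where
  "validC app lam pr unpr G c s Dl \<longleftrightarrow>
     (\<forall>ex ea. sat app unpr ex ea G Dl \<longrightarrow> semC app lam pr unpr ex ea c \<in> tC app unpr s)"

end

theory Submission
  imports Defs
begin

lemma sc_mono: assumes "scott_cont f" shows "mono f"
proof (rule monoI)
  fix x y :: 'a assume xy: "x \<le> y"
  have "directed {x,y}" unfolding directed_def using xy by auto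
  then have "f (Sup {x,y}) = Sup (f ` {x,y})" using assms unfolding scott_cont_def by blast
  moreover have "Sup {x,y} = y" using xy by (simp add: sup_absorb2)
  ultimately have "f y = sup (f x) (f y)" by simp
  then show "f x \<le> f y" by (metis sup.cobounded1)
qed

lemma dir_image: assumes "directed S" "mono f" shows "directed (f ` S)"
  using assms unfolding directed_def by (auto dest: monoD) (meson monoD)

lemma sc_comp: fixes g :: "'a::complete_lattice \<Rightarrow> 'b::complete_lattice" and f :: "'b \<Rightarrow> 'c::complete_lattice"
  assumes "scott_cont f" "scott_cont g" shows "scott_cont (\<lambda>x. f (g x))"
  unfolding scott_cont_def
proof (intro allI impI)
  fix S :: "'a set" assume d: "directed S"
  have "g (Sup S) = Sup (g ` S)" using assms(2) d unfolding scott_cont_def by blast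
  moreover have "directed (g ` S)" using dir_image[OF d sc_mono[OF assms(2)]] .
  ultimately show "f (g (Sup S)) = Sup ((\<lambda>x. f (g x)) ` S)"
    using assms(1) unfolding scott_cont_def by (simp add: image_image)
qed

lemma sc_const: "scott_cont (\<lambda>x. c)"
  unfolding scott_cont_def directed_def by auto

lemma sc_id: "scott_cont (\<lambda>x. x)"
  unfolding scott_cont_def by simp

lemma sc_pair: assumes "scott_cont f" "scott_cont g" shows "scott_cont (\<lambda>x. (f x, g x))"
  using assms unfolding scott_cont_def by (auto intro!: prod_eqI simp: fst_Sup snd_Sup image_image)

lemma sc_fst: "scott_cont fst"
  unfolding scott_cont_def by (simp add: fst_Sup)

lemma sc_snd: "scott_cont snd"
  unfolding scott_cont_def by (simp add: snd_Sup)

lemma sc_apply: assumes "scott_cont f" shows "scott_cont (\<lambda>x. f x i)"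
  using assms unfolding scott_cont_def by (simp add: image_image)

lemma sc_fun: assumes "\<And>i. scott_cont (\<lambda>x. f x i)" shows "scott_cont f"
  using assms unfolding scott_cont_def by (auto simp: image_image)

lemma sc_upd: assumes "scott_cont f" "scott_cont g" shows "scott_cont (\<lambda>x. (f x)(i := g x))"
proof (rule sc_fun)
  fix j show "scott_cont (\<lambda>x. ((f x)(i := g x)) j)"
    using sc_apply[OF assms(1)] assms(2) by (cases "j = i") auto
qed

lemma sc_app2:
  fixes app :: "'d::complete_lattice \<Rightarrow> 'c::complete_lattice \<Rightarrow> 'r::complete_lattice"
  and f :: "'a::complete_lattice \<Rightarrow> 'd" and g :: "'a \<Rightarrow> 'c"
  assumes A: "scott_cont app" and B: "\<And>d. scott_cont (app d)"
    and f: "scott_cont f" and g: "scott_cont g"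
  shows "scott_cont (\<lambda>x. app (f x) (g x))"
  unfolding scott_cont_def
proof (intro allI impI)
  fix S :: "'a set" assume d: "directed S"
  have mf: "mono f" and mg: "mono g" using f g by (auto intro: sc_mono)
  have ma: "mono app" using A by (rule sc_mono)
  have mb: "\<And>d. mono (app d)" using B by (rule sc_mono)
  have df: "directed (f ` S)" and dg: "directed (g ` S)" using d mf mg by (auto intro: dir_image)
  have "app (f (Sup S)) (g (Sup S)) = app (Sup (f ` S)) (Sup (g ` S))"
    using f g d unfolding scott_cont_def by simp
  also have "\<dots> = (Sup (app ` f ` S)) (Sup (g ` S))"
    using A df unfolding scott_cont_def by simp
  also have "\<dots> = (SUP x\<in>S. app (f x) (Sup (g ` S)))" by (simp add: image_image)
  also have "\<dots> = (SUP x\<in>S. SUP y\<in>S. app (f x) (g y))"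
    using B dg unfolding scott_cont_def by (simp add: image_image)
  also have "\<dots> = (SUP x\<in>S. app (f x) (g x))"
  proof (rule antisym)
    show "(SUP x\<in>S. SUP y\<in>S. app (f x) (g y)) \<le> (SUP x\<in>S. app (f x) (g x))"
    proof (intro SUP_least)
      fix x y assume xs: "x \<in> S" and ys: "y \<in> S"
      then obtain z where z: "z \<in> S" "x \<le> z" "y \<le> z" using d unfolding directed_def by blast
      have "app (f x) (g y) \<le> app (f z) (g y)"
        using monoD[OF ma monoD[OF mf z(2)]] by (simp add: le_fun_def)
      also have "\<dots> \<le> app (f z) (g z)" using monoD[OF mb monoD[OF mg z(3)]] .
      also have "\<dots> \<le> (SUP x\<in>S. app (f x) (g x))" using z(1) by (rule SUP_upper)
      finally show "app (f x) (g y) \<le> (SUP x\<in>S. app (f x) (g x))" .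
    qed
    show "(SUP x\<in>S. app (f x) (g x)) \<le> (SUP x\<in>S. SUP y\<in>S. app (f x) (g y))"
      by (intro SUP_least SUP_upper2) auto
  qed
  finally show "app (f (Sup S)) (g (Sup S)) = Sup ((\<lambda>x. app (f x) (g x)) ` S)" .
qed

lemma sc_lam:
  fixes lam :: "('c::complete_lattice \<Rightarrow> 'r::complete_lattice) \<Rightarrow> 'd::complete_lattice"
  and H :: "'a::complete_lattice \<Rightarrow> 'c \<Rightarrow> 'r"
  assumes L: "scott_cont_on {f. scott_cont f} lam"
    and H: "scott_cont (\<lambda>p. H (fst p) (snd p))"
  shows "scott_cont (\<lambda>x. lam (H x))" and "scott_cont (H x)"
proof -
  have Hk: "scott_cont (H x)" for x
    using sc_comp[OF H sc_pair[OF sc_const sc_id]] by simp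
  show "scott_cont (H x)" by (rule Hk)
  have HF: "scott_cont H"
    by (rule sc_fun) (use sc_comp[OF H sc_pair[OF sc_id sc_const]] in simp)
  show "scott_cont (\<lambda>x. lam (H x))"
    unfolding scott_cont_def
  proof (intro allI impI)
    fix S :: "'a set" assume d: "directed S"
    have "directed (H ` S)" using d sc_mono[OF HF] by (rule dir_image)
    moreover have "H ` S \<subseteq> {f. scott_cont f}" using Hk by auto
    moreover have "H (Sup S) = Sup (H ` S)" using HF d unfolding scott_cont_def by blast
    ultimately show "lam (H (Sup S)) = Sup ((\<lambda>x. lam (H x)) ` S)"
      using L unfolding scott_cont_on_def by (simp add: image_image)
  qed
qed

lemma sem_cont:
  fixes app :: "'d::complete_lattice \<Rightarrow> 'c::complete_lattice \<Rightarrow> 'r::complete_lattice"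
    and lam :: "('c \<Rightarrow> 'r) \<Rightarrow> 'd"
    and pr :: "'d \<times> 'c \<Rightarrow> 'c"
    and unpr :: "'c \<Rightarrow> 'd \<times> 'c"
  assumes A: "scott_cont app" and B: "\<And>d. scott_cont (app d)"
    and L: "scott_cont_on {f. scott_cont f} lam"
    and P: "scott_cont pr" and U: "scott_cont unpr"
  shows "scott_cont (\<lambda>E. semT app lam pr unpr (fst E) (snd E) M)"
    and "scott_cont (\<lambda>E. semC app lam pr unpr (fst E) (snd E) c)"
proof (induct M and c)
  case (Var x)
  then show ?case using sc_apply[OF sc_fst] by simp
next
  case (Lam x M)
  let ?g = "\<lambda>p::((nat \<Rightarrow> 'd) \<times> (nat \<Rightarrow> 'c)) \<times> 'c. ((fst (fst p))(x := fst (unpr (snd p))), snd (fst p))"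
  have g: "scott_cont ?g"
    by (intro sc_pair sc_upd sc_comp[OF sc_fst sc_fst] sc_comp[OF sc_snd sc_fst]
        sc_comp[OF sc_fst sc_comp[OF U sc_snd]])
  have "scott_cont (\<lambda>p. (\<lambda>E. semT app lam pr unpr (fst E) (snd E) M) (?g p))"
    using Lam by (intro sc_comp[OF _ g]) simp
  then have "scott_cont (\<lambda>p. app (semT app lam pr unpr ((fst (fst p))(x := fst (unpr (snd p)))) (snd (fst p)) M) (snd (unpr (snd p))))"
    by (intro sc_app2[OF A B]) (auto intro: sc_comp[OF sc_snd sc_comp[OF U sc_snd]])
  then show ?case
    using sc_lam(1)[OF L, where H = "\<lambda>E k. app (semT app lam pr unpr ((fst E)(x := fst (unpr k))) (snd E) M) (snd (unpr k))"]
    by simp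
next
  case (App M N)
  have "scott_cont (\<lambda>p. app (semT app lam pr unpr (fst (fst p)) (snd (fst p)) M) (pr (semT app lam pr unpr (fst (fst p)) (snd (fst p)) N, snd p)))"
  proof (intro sc_app2[OF A B])
    show "scott_cont (\<lambda>p. semT app lam pr unpr (fst (fst p)) (snd (fst p)) M)"
      using sc_comp[OF App(1) sc_fst] by simp
    have "scott_cont (\<lambda>p. semT app lam pr unpr (fst (fst p)) (snd (fst p)) N)"
      using sc_comp[OF App(2) sc_fst] by simp
    then show "scott_cont (\<lambda>p. pr (semT app lam pr unpr (fst (fst p)) (snd (fst p)) N, snd p))"
      by (intro sc_comp[OF P] sc_pair sc_snd)
  qed
  then show ?case
    using sc_lam(1)[OF L, where H = "\<lambda>E k. app (semT app lam pr unpr (fst E) (snd E) M) (pr (semT app lam pr unpr (fst E) (snd E) N, k))"]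
    by simp
next
  case (Mu a c)
  let ?g = "\<lambda>p::((nat \<Rightarrow> 'd) \<times> (nat \<Rightarrow> 'c)) \<times> 'c. (fst (fst p), (snd (fst p))(a := snd p))"
  have g: "scott_cont ?g"
    by (intro sc_pair sc_upd sc_comp[OF sc_fst sc_fst] sc_comp[OF sc_snd sc_fst] sc_snd)
  have "scott_cont (\<lambda>p. (\<lambda>E. semC app lam pr unpr (fst E) (snd E) c) (?g p))"
    using Mu by (intro sc_comp[OF _ g]) simp
  then have h: "scott_cont (\<lambda>p. unpr (semC app lam pr unpr (fst (fst p)) ((snd (fst p))(a := snd p)) c))"
    by (intro sc_comp[OF U]) simp
  have "scott_cont (\<lambda>p. app (fst (unpr (semC app lam pr unpr (fst (fst p)) ((snd (fst p))(a := snd p)) c)))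
       (snd (unpr (semC app lam pr unpr (fst (fst p)) ((snd (fst p))(a := snd p)) c))))"
    by (intro sc_app2[OF A B] sc_comp[OF sc_fst h] sc_comp[OF sc_snd h])
  then show ?case
    using sc_lam(1)[OF L, where H = "\<lambda>E k. app (fst (unpr (semC app lam pr unpr (fst E) ((snd E)(a := k)) c)))
       (snd (unpr (semC app lam pr unpr (fst E) ((snd E)(a := k)) c)))"]
    by simp
next
  case (Cmd a M)
  then show ?case
    using sc_comp[OF P sc_pair[OF Cmd sc_apply[OF sc_snd, of a]]] by simp
qed

lemma leR_sound: "leR s t \<Longrightarrow> isR s \<and> isR t \<and> tR s \<subseteq> tR t"
proof (induct rule: leR.induct)
  case (R_bot2 a) then show ?case by auto
next
  case (R_sup1 c a b) then show ?case by auto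
next
  case (R_sup2 c a b) then show ?case by auto
qed auto

lemma tD_R: "isR r \<Longrightarrow> tD app unpr r = {d. \<forall>k. app d k \<in> tR r}"
  by (induct r) auto

lemma le_sound:
  "leD s t \<Longrightarrow> tD app unpr s \<subseteq> tD app unpr t"
  "leC s t \<Longrightarrow> tC app unpr s \<subseteq> tC app unpr t"
proof (induct rule: leD_leC.inducts)
  case (D_R r1 r2)
  then show ?case using leR_sound[OF D_R] tD_R[of r1 app unpr] tD_R[of r2 app unpr] by auto
next
  case (D_arr k2 k1 r1 r2)
  then show ?case using leR_sound[OF D_arr(3)] by auto
qed auto

lemma look_upd: "look (G(x := None)) y = (if y = x then Om else look G y)"
  by (simp add: look_def)

theorem theorem4p16:
  fixes app :: "'d::complete_lattice \<Rightarrow> 'c::complete_lattice \<Rightarrow> 'r::complete_lattice"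
    and lam :: "('c \<Rightarrow> 'r) \<Rightarrow> 'd"
    and pr :: "'d \<times> 'c \<Rightarrow> 'c"
    and unpr :: "'c \<Rightarrow> 'd \<times> 'c"
  assumes "lm_model app lam pr unpr"
  shows "(\<forall>G M s Dl. tyT G M s Dl \<longrightarrow> validT app lam pr unpr G M s Dl)
       \<and> (\<forall>G c s Dl. tyC G c s Dl \<longrightarrow> validC app lam pr unpr G c s Dl)"
proof -
  have A: "scott_cont app" and B: "\<And>d. scott_cont (app d)"
    and L: "scott_cont_on {f. scott_cont f} lam"
    and LA: "\<And>f. scott_cont f \<Longrightarrow> app (lam f) = f"
    and P: "scott_cont pr" and U: "scott_cont unpr"
    and UP: "\<And>p. unpr (pr p) = p"
    using assms unfolding lm_model_def by auto
  note SC = sem_cont[OF A B L P U]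
  have main: "tyT G M s Dl \<Longrightarrow> validT app lam pr unpr G M s Dl"
       "tyC G' c s' Dl' \<Longrightarrow> validC app lam pr unpr G' c s' Dl'" for G M s Dl G' c s' Dl'
  proof (induct rule: tyT_tyC.inducts)
    case (T_ax G Dl x d)
    then show ?case unfolding validT_def sat_def
      by (metis look_def option.simps(5) semT.simps(1))
  next
    case (T_abs G M k r Dl x d)
    show ?case unfolding validT_def
    proof (intro allI impI)
      fix ex ea assume s: "sat app unpr ex ea (G(x := None)) Dl"
      let ?f = "\<lambda>k. app (semT app lam pr unpr (ex(x := fst (unpr k))) ea M) (snd (unpr k))"
      have "scott_cont (\<lambda>k. (\<lambda>E. semT app lam pr unpr (fst E) (snd E) M) (ex(x := fst (unpr k)), ea))"
        by (intro sc_comp[OF SC(1)] sc_pair sc_upd sc_const sc_comp[OF sc_fst U])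
      then have "scott_cont ?f"
        by (intro sc_app2[OF A B]) (auto intro: sc_comp[OF sc_snd U])
      then have eq: "app (lam ?f) = ?f" by (rule LA)
      have "\<forall>c\<in>tC app unpr (Times d k). ?f c \<in> tR r"
      proof
        fix c assume c: "c \<in> tC app unpr (Times d k)"
        have "sat app unpr (ex(x := fst (unpr c))) ea G Dl"
          using s c T_abs(3) unfolding sat_def by (auto simp: look_upd split: if_splits)
        then show "?f c \<in> tR r" using T_abs(2) c unfolding validT_def by auto
      qed
      then show "semT app lam pr unpr ex ea (Lam x M) \<in> tD app unpr (Arr (Times d k) r)"
        unfolding semT.simps(2) using eq by (simp add: fun_eq_iff)
    qed
  next
    case (T_app G M d k r Dl N)
    show ?case unfolding validT_def
    proof (intro allI impI)
      fix ex ea assume s: "sat app unpr ex ea G Dl"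
      let ?f = "\<lambda>k. app (semT app lam pr unpr ex ea M) (pr (semT app lam pr unpr ex ea N, k))"
      have "scott_cont ?f" using sc_comp[OF B sc_comp[OF P sc_pair[OF sc_const sc_id]]] by simp
      then have eq: "app (lam ?f) = ?f" by (rule LA)
      have "\<forall>c\<in>tC app unpr k. ?f c \<in> tR r"
      proof
        fix c assume c: "c \<in> tC app unpr k"
        have "pr (semT app lam pr unpr ex ea N, c) \<in> tC app unpr (Times d k)"
          using T_app(4) s c unfolding validT_def by (simp add: UP)
        then show "?f c \<in> tR r" using T_app(2) s unfolding validT_def by auto
      qed
      then show "semT app lam pr unpr ex ea (App M N) \<in> tD app unpr (Arr k r)"
        unfolding semT.simps(2-4) using eq by (simp add: fun_eq_iff)
    qed
  next
    case (T_mu G c k' r Dl \<alpha> k)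
    show ?case unfolding validT_def
    proof (intro allI impI)
      fix ex ea assume s: "sat app unpr ex ea G (Dl(\<alpha> := None))"
      let ?f = "\<lambda>k. app (fst (unpr (semC app lam pr unpr ex (ea(\<alpha> := k)) c)))
                   (snd (unpr (semC app lam pr unpr ex (ea(\<alpha> := k)) c)))"
      have "scott_cont (\<lambda>k. (\<lambda>E. semC app lam pr unpr (fst E) (snd E) c) (ex, ea(\<alpha> := k)))"
        by (intro sc_comp[OF SC(2)] sc_pair sc_upd sc_const sc_id)
      then have h: "scott_cont (\<lambda>k. unpr (semC app lam pr unpr ex (ea(\<alpha> := k)) c))"
        by (intro sc_comp[OF U]) simp
      have "scott_cont ?f"
        by (intro sc_app2[OF A B] sc_comp[OF sc_fst h] sc_comp[OF sc_snd h])
      then have eq: "app (lam ?f) = ?f" by (rule LA)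
      have "\<forall>c0\<in>tC app unpr k. ?f c0 \<in> tR r"
      proof
        fix c0 assume c0: "c0 \<in> tC app unpr k"
        have "sat app unpr ex (ea(\<alpha> := c0)) G Dl"
          using s c0 T_mu(3) unfolding sat_def by (auto simp: look_upd split: if_splits)
        then show "?f c0 \<in> tR r" using T_mu(2) unfolding validC_def by auto
      qed
      then show "semT app lam pr unpr ex ea (Mu \<alpha> c) \<in> tD app unpr (Arr k r)"
        unfolding semT.simps(2-4) using eq by (simp add: fun_eq_iff)
    qed
  next
    case (T_and G M s Dl t)
    then show ?case unfolding validT_def by auto
  next
    case (T_om G Dl M)
    then show ?case unfolding validT_def by auto
  next
    case (T_le G M s Dl t)
    then show ?case unfolding validT_def using le_sound(1)[OF T_le(3)] by blast
  next
    case (C_cmd G M d Dl \<alpha> k)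
    then show ?case unfolding validT_def validC_def sat_def by (auto simp: UP)
  next
    case (C_and G c s Dl t)
    then show ?case unfolding validC_def by auto
  next
    case (C_om G Dl c)
    then show ?case unfolding validC_def by auto
  next
    case (C_le G c s Dl t)
    then show ?case unfolding validC_def using le_sound(2)[OF C_le(3)] by blast
  qed
  show ?thesis using main by blast
qed

end
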